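(* Let $y_0\in E$ and let $u$ be a positive solution of $0=\tfrac12b^2u''+\tilde au'+\eta u-u^2-d\frac{(u')^2}{u}$ on $[y_0,\infty)$ with $u(y)/\eta(y)\to1$ as $y\to\infty$ and $u\le\eta$ for all sufficiently large $y$. Assume that on $[y_0,\infty)$, $\eta\in C^2$, $\eta>0$, $\bar a:=\frac{\tilde a}{\eta}+(b^2-2d)\frac{\eta'}{\eta^2}\le0$, and that $\Psi\eta$ is increasing and concave on $[y_0,\infty)$. Then $u\le\eta\,\Psi\eta$ for all sufficiently large $y$.
   Context: $E=(E_-,\infty)$ with $E_-\in\{-\infty\}\cup\mathbb R$. $r,\lambda,\sigma,a,b,\rho,\delta:E\to\mathbb R$ are locally Lipschitz with $\sigma>0$, $b(y)\neq0$, $\rho(y)\in[-1,1]$; $R\in(0,\infty)\setminus\{1\}$. Define $\eta=\frac1R\big(\delta-(1-R)(r+\frac{\lambda^2}{2R})\big)$, $\tilde a=a+\frac{1-R}{R}\rho\lambda b$, $d=\frac12b^2((1-\rho^2)R+\rho^2+1)$, and for positive $g\in C^2$, $\Psi g=1+\frac{\frac12b^2g''+\tilde ag'}{g^2}-d\frac{(g')^2}{g^3}$. *)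

theory Defs
  imports "HOL-Analysis.Analysis"
begin

definition stateE :: "ereal \<Rightarrow> real set" where
  "stateE Em = {y. Em < ereal y}"

definition loc_lipschitz_on :: "real set \<Rightarrow> (real \<Rightarrow> real) \<Rightarrow> bool" where
  "loc_lipschitz_on S f \<longleftrightarrow>
     (\<forall>x\<in>S. \<exists>e>0. \<exists>L. \<forall>y\<in>ball x e \<inter> S. \<forall>z\<in>ball x e \<inter> S. \<bar>f y - f z\<bar> \<le> L * \<bar>y - z\<bar>)"

definition eta_fun :: "real \<Rightarrow> (real \<Rightarrow> real) \<Rightarrow> (real \<Rightarrow> real) \<Rightarrow> (real \<Rightarrow> real) \<Rightarrow> real \<Rightarrow> real" where
  "eta_fun R \<delta> r lam y = (1 / R) * (\<delta> y - (1 - R) * (r y + (lam y)\<^sup>2 / (2 * R)))"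

definition atilde_fun :: "real \<Rightarrow> (real \<Rightarrow> real) \<Rightarrow> (real \<Rightarrow> real) \<Rightarrow> (real \<Rightarrow> real) \<Rightarrow> (real \<Rightarrow> real) \<Rightarrow> real \<Rightarrow> real" where
  "atilde_fun R a \<rho> lam b y = a y + ((1 - R) / R) * \<rho> y * lam y * b y"

definition d_fun :: "real \<Rightarrow> (real \<Rightarrow> real) \<Rightarrow> (real \<Rightarrow> real) \<Rightarrow> real \<Rightarrow> real" where
  "d_fun R b \<rho> y = (1/2) * (b y)\<^sup>2 * ((1 - (\<rho> y)\<^sup>2) * R + (\<rho> y)\<^sup>2 + 1)"

definition Psi_op :: "(real \<Rightarrow> real) \<Rightarrow> (real \<Rightarrow> real) \<Rightarrow> (real \<Rightarrow> real) \<Rightarrow> (real \<Rightarrow> real) \<Rightarrow> real \<Rightarrow> real" where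
  "Psi_op b atl d g y =
     1 + ((1/2) * (b y)\<^sup>2 * deriv (deriv g) y + atl y * deriv g y) / (g y)\<^sup>2
       - d y * (deriv g y)\<^sup>2 / (g y) ^ 3"

end

theory Submission
  imports Defs
begin

lemma key_alg:
  fixes B aa dd e e1 e2 u u1 u2 :: real
  assumes e: "e > 0" and u: "u > 0"
   and ode: "0 = (1/2)*B*u2 + aa*u1 + e*u - u^2 - dd*u1^2/u"
  shows "B*(u2/e - u1*e1/e^2 - (u1*e1+u*e2)/e^2 + 2*u*e1^2/e^3)
     = 2*e*((u/e)*((u/e)-(1 + ((1/2)*B*e2 + aa*e1)/e^2 - dd*e1^2/e^3))
        - (aa/e + (B - 2*dd)*e1/e^2)*(u1/e - u*e1/e^2) + (dd/e)*(u1/e - u*e1/e^2)^2/(u/e))"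
proof -
  have u2: "B*u2 = 2*(- aa*u1 - e*u + u^2 + dd*u1^2/u)" using ode by (simp add: algebra_simps)
  have "B*(u2/e - u1*e1/e^2 - (u1*e1+u*e2)/e^2 + 2*u*e1^2/e^3) = (B*u2)/e - B*(u1*e1/e^2 + (u1*e1+u*e2)/e^2 - 2*u*e1^2/e^3)"
    by (simp add: algebra_simps)
  also have "\<dots> = 2*(- aa*u1 - e*u + u^2 + dd*u1^2/u)/e - B*(u1*e1/e^2 + (u1*e1+u*e2)/e^2 - 2*u*e1^2/e^3)"
    by (simp add: u2)
  also have "\<dots> = 2*e*((u/e)*((u/e)-(1 + ((1/2)*B*e2 + aa*e1)/e^2 - dd*e1^2/e^3))
        - (aa/e + (B - 2*dd)*e1/e^2)*(u1/e - u*e1/e^2) + (dd/e)*(u1/e - u*e1/e^2)^2/(u/e))"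
    using e u by (simp add: field_simps power2_eq_square power3_eq_cube)
  finally show ?thesis .
qed

lemma core_lemma:
  fixes v vd vdd P :: "real \<Rightarrow> real" and Y m :: real
  assumes d1: "\<And>y. y > Y \<Longrightarrow> (v has_real_derivative vd y) (at y)"
    and d2: "\<And>y. y > Y \<Longrightarrow> (vd has_real_derivative vdd y) (at y)"
    and key: "\<And>y. y > Y \<Longrightarrow> v y > P y \<Longrightarrow> vd y \<ge> 0 \<Longrightarrow> vdd y > 0"
    and vlim: "(v \<longlongrightarrow> 1) at_top"
    and m: "m > Y" "vd m \<ge> 0" "v m > P m"
    and H: "\<And>t. t > m \<Longrightarrow> (\<forall>y\<in>{m<..<t}. vd y > vd m) \<Longrightarrow> v t > P t"
  shows False
proof -
  have cont1: "isCont vd y" if "y > Y" for y using d2[OF that] by (rule DERIV_isCont)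
  have step1: "vd t > vd m" if t: "t > m" for t
  proof (rule ccontr)
    assume nt: "\<not> vd t > vd m"
    obtain d where d: "d > 0" "\<And>h. h > 0 \<Longrightarrow> h < d \<Longrightarrow> vd m < vd (m + h)"
      using DERIV_pos_inc_right[OF d2[OF m(1)] key[OF m(1) m(3) m(2)]] by blast
    have td: "t \<ge> m + d" using d(2)[of "t - m"] nt t by force
    define K where "K = {y \<in> {m + d/2..t}. vd y \<le> vd m}"
    have contK: "continuous_on {m + d/2..t} vd"
      using cont1 m(1) d(1) by (intro continuous_at_imp_continuous_on) auto
    have closedK: "closed K" unfolding K_def
      by (rule continuous_on_closed_Collect_le[OF contK continuous_on_const closed_atLeastAtMost])
    have tK: "t \<in> K" using nt td d(1) unfolding K_def by auto
    have bddK: "bdd_below K" unfolding K_def by (rule bdd_belowI[of _ "m + d/2"]) auto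
    define s where "s = Inf K"
    have sK: "s \<in> K" unfolding s_def using closed_contains_Inf[OF _ bddK closedK] tK by blast
    have s1: "s \<ge> m + d/2" "vd s \<le> vd m" using sK unfolding K_def by auto
    have below: "vd y > vd m" if y: "y \<in> {m<..<s}" for y
    proof (cases "y < m + d")
      case True thus ?thesis using d(2)[of "y - m"] y by auto
    next
      case False
      have "y < s" using y by auto
      hence "y \<notin> K" unfolding s_def using cInf_lower[OF _ bddK] by force
      moreover have "y \<in> {m + d/2..t}" using False y sK d(1) unfolding K_def by auto
      ultimately show ?thesis unfolding K_def by auto
    qed
    have sm: "s > m" using s1 d(1) by linarith
    have vs: "v s > P s" using H[OF sm] below by auto
    have v1s: "vd s \<ge> vd m"
    proof (rule ccontr)
      assume "\<not> vd s \<ge> vd m"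
      hence "vd s < vd m" by simp
      have "eventually (\<lambda>y. vd y < vd m) (at s)"
        using cont1[of s] sm m(1) \<open>vd s < vd m\<close> unfolding isCont_def
        by (intro order_tendstoD) auto
      hence "eventually (\<lambda>y. vd y < vd m) (at_left s)"
        by (rule filter_leD[OF at_le, rotated]) simp
      moreover have "eventually (\<lambda>y. y \<in> {m<..<s}) (at_left s)" using sm by (rule eventually_at_left_real)
      ultimately have "eventually (\<lambda>y. False) (at_left s)"
        by eventually_elim (use below in force)
      thus False by simp
    qed
    have "vdd s > 0" using key[of s] sm m vs v1s s1 by auto
    then obtain e where e: "e > 0" "\<And>h. h > 0 \<Longrightarrow> h < e \<Longrightarrow> vd (s - h) < vd s"
      using DERIV_pos_inc_left[OF d2[of s]] sm m(1) by force
    define h where "h = min (e/2) ((s - m)/2)"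
    have "h > 0" "h < e" using e sm unfolding h_def by auto
    hence "vd (s - h) < vd s" by (rule e(2))
    moreover have "h \<le> (s - m)/2" unfolding h_def by (rule min.cobounded2)
    hence "s - h \<in> {m<..<s}" using \<open>h > 0\<close> sm by auto
    ultimately show False using below[of "s - h"] s1 \<open>vd (s - h) < vd s\<close> by auto
  qed
  have pos2: "vdd t > 0" if "t > m" for t
  proof -
    have "v t > P t" using H[OF that] step1 by auto
    thus ?thesis using key[of t] that m step1[OF that] by auto
  qed
  define c where "c = vd (m + 1)"
  have c: "c > 0" using step1[of "m+1"] m(2) unfolding c_def by auto
  have dpos: "\<exists>z. (vd has_real_derivative z) (at x) \<and> z \<ge> 0" if "x \<ge> m + 1" for x
  proof -
    have xm: "x > m" using that by simp
    have "x > Y" using xm m(1) by simp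
    hence "(vd has_real_derivative vdd x) (at x)" by (rule d2)
    moreover have "vdd x \<ge> 0" using pos2[OF xm] by simp
    ultimately show ?thesis by blast
  qed
  have v1ge: "vd t \<ge> c" if "t \<ge> m + 1" for t
    unfolding c_def
    by (rule DERIV_nonneg_imp_nondecreasing[OF that]) (rule dpos, simp)
  have vge: "v t \<ge> v (m+1) + c * (t - (m+1))" if t: "t \<ge> m + 1" for t
  proof -
    have "(\<lambda>x. v x - c * x) (m+1) \<le> (\<lambda>x. v x - c * x) t"
    proof (rule DERIV_nonneg_imp_nondecreasing[OF t])
      fix x assume x: "m + 1 \<le> x" "x \<le> t"
      have xY: "x > Y" using x m(1) by simp
      have "((\<lambda>x. v x - c * x) has_real_derivative vd x - c * 1) (at x)"
        by (intro DERIV_diff DERIV_cmult DERIV_ident d1[OF xY])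
      moreover have "vd x - c * 1 \<ge> 0" using v1ge[OF x(1)] by simp
      ultimately show "\<exists>y. ((\<lambda>x. v x - c * x) has_real_derivative y) (at x) \<and> y \<ge> 0"
        by blast
    qed
    thus ?thesis by (simp add: algebra_simps)
  qed
  have "eventually (\<lambda>y. v y < 2) at_top" using vlim by (intro order_tendstoD) auto
  then obtain N where N: "\<And>y. y \<ge> N \<Longrightarrow> v y < 2" by (auto simp: eventually_at_top_linorder)
  define q where "q = (2 - v (m+1)) / c + 1"
  define t where "t = max N (max (m + 1) (m + 1 + q))"
  have t1: "t \<ge> m + 1" unfolding t_def by simp
  have tq: "q \<le> t - (m+1)" unfolding t_def by simp
  have cq: "c * q = 2 - v (m+1) + c" unfolding q_def using c by (simp add: distrib_left)
  have "c * q \<le> c * (t - (m+1))" using c tq by (intro mult_left_mono) auto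
  hence "2 - v (m+1) + c \<le> c * (t - (m+1))" using cq by simp
  hence "v t \<ge> 2 + c" using vge[OF t1] by linarith
  moreover have "v t < 2" by (rule N) (simp add: t_def)
  ultimately show False using c by linarith
qed


lemma abstract_main:
  fixes v vd vdd P :: "real \<Rightarrow> real" and Y :: real
  assumes d1: "\<And>y. y > Y \<Longrightarrow> (v has_real_derivative vd y) (at y)"
    and d2: "\<And>y. y > Y \<Longrightarrow> (vd has_real_derivative vdd y) (at y)"
    and key: "\<And>y. y > Y \<Longrightarrow> v y > P y \<Longrightarrow> vd y \<ge> 0 \<Longrightarrow> vdd y > 0"
    and vlim: "(v \<longlongrightarrow> 1) at_top"
    and vle: "eventually (\<lambda>y. v y \<le> 1) at_top"
    and Pmono: "mono_on {Y<..} P"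
    and Pconc: "concave_on {Y<..} P"
  shows "eventually (\<lambda>y. v y \<le> P y) at_top"
proof (rule ccontr)
  assume nev: "\<not> eventually (\<lambda>y. v y \<le> P y) at_top"
  obtain Y1 where Y1: "\<And>y. y \<ge> Y1 \<Longrightarrow> v y \<le> 1" using vle by (auto simp: eventually_at_top_linorder)
  define Z where "Z = max Y Y1 + 1"
  have ZY: "Z > Y" "Z > Y1" unfolding Z_def by auto
  have freq: "\<exists>y\<ge>N. v y > P y" for N
  proof (rule ccontr)
    assume "\<not> (\<exists>y\<ge>N. v y > P y)"
    hence "\<forall>y\<ge>N. v y \<le> P y" by (auto simp: not_less)
    hence "eventually (\<lambda>y. v y \<le> P y) at_top" by (auto simp: eventually_at_top_linorder)
    with nev show False by contradiction
  qed
  have contP: "continuous_on {Y<..} P"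
  proof -
    have "continuous_on {Y<..} (\<lambda>x. - P x)"
      using Pconc unfolding concave_on_def by (intro convex_on_continuous) auto
    hence "continuous_on {Y<..} (\<lambda>x. - (- P x))" by (rule continuous_on_minus)
    thus ?thesis by simp
  qed
  have contv: "continuous_on {Y<..} v"
    using d1 by (intro continuous_at_imp_continuous_on) (auto intro: DERIV_isCont)
  show False
  proof (cases "\<exists>p\<ge>Z. \<forall>y\<ge>p. v y > P y")
    case True
    then obtain p where p: "p \<ge> Z" "\<And>y. y \<ge> p \<Longrightarrow> v y > P y" by blast
    show False
    proof (cases "\<exists>y1\<ge>p. vd y1 \<ge> 0")
      case True
      then obtain y1 where y1: "y1 \<ge> p" "vd y1 \<ge> 0" by blast
      have a1: "y1 > Y" using y1 p ZY by auto
      have a2: "P y1 < v y1" using y1 p by auto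
      have a3: "P t < v t" if "t > y1" for t using p(2)[of t] that y1(1) by simp
      show False
        by (rule core_lemma[where v=v and vd=vd and vdd=vdd and P=P and Y=Y and m=y1, OF d1 d2 key vlim a1 y1(2) a2 a3])
    next
      case False
      have neg: "vd y < 0" if "y \<ge> p" for y
        using False that not_le by blast
      have dneg: "\<exists>z. (v has_real_derivative z) (at x) \<and> z < 0" if "x \<ge> p" for x
      proof -
        have "x > Y" using that p ZY by auto
        thus ?thesis using d1[of x] neg[OF that] by blast
      qed
      have dnonpos: "\<exists>z. (v has_real_derivative z) (at x) \<and> z \<le> 0" if "x \<ge> p" for x
        using dneg[OF that] by (auto intro: less_imp_le)
      have "v (p+1) < v p"
        by (rule DERIV_neg_imp_decreasing[of p "p+1" v]) (use dneg in auto)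
      moreover have "v p \<le> 1" using Y1 p ZY by auto
      ultimately have lt: "v (p+1) < 1" by simp
      have le: "v t \<le> v (p+1)" if "t \<ge> p + 1" for t
        by (rule DERIV_nonpos_imp_nonincreasing[OF that]) (rule dnonpos, simp)
      have "eventually (\<lambda>y. v y > v (p+1)) at_top" using vlim lt by (intro order_tendstoD) auto
      then obtain N where N: "\<And>y. y \<ge> N \<Longrightarrow> v y > v (p+1)" by (auto simp: eventually_at_top_linorder)
      have "v (max N (p+1)) > v (p+1)" by (rule N) simp
      moreover have "v (max N (p+1)) \<le> v (p+1)" by (rule le) simp
      ultimately show False by simp
    qed
  next
    case False
    hence "\<not> (\<forall>y\<ge>Z. v y > P y)" by blast
    hence "\<exists>y\<ge>Z. v y \<le> P y" by (auto simp: not_less)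
    then obtain p0 where p0: "p0 \<ge> Z" "v p0 \<le> P p0" by blast
    obtain p where p: "p \<ge> p0 + 1" "v p > P p" using freq[of "p0 + 1"] by blast
    have sub: "{p0..p} \<subseteq> {Y<..}" using p0 ZY by auto
    have contw: "continuous_on {p0..p} (\<lambda>y. v y - P y)"
      by (intro continuous_on_diff continuous_on_subset[OF contv sub] continuous_on_subset[OF contP sub])
    have ne: "{p0..p} \<noteq> {}" using p by simp
    obtain m where m: "m \<in> {p0..p}" "\<And>y. y \<in> {p0..p} \<Longrightarrow> v y - P y \<le> v m - P m"
      using continuous_attains_sup[OF compact_Icc ne contw] by blast
    have pin: "p \<in> {p0..p}" using p by simp
    have wm: "v m - P m > 0" using m(2)[OF pin] p(2) by simp
    have mp0: "m > p0"
    proof (rule ccontr)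
      assume "\<not> m > p0"
      hence "m = p0" using m(1) by simp
      thus False using wm p0(2) by simp
    qed
    have mY: "m > Y" using mp0 p0 ZY by auto
    have slope: "P t - P m \<le> vd m * (t - m)" if t: "t > m" for t
    proof -
      define s where "s = (P t - P m) / (t - m)"
      have tm: "t - m > 0" using t by simp
      have "s \<le> vd m"
      proof (rule tendsto_lowerbound)
        have "((\<lambda>x. (v x - v m) / (x - m)) \<longlongrightarrow> vd m) (at m)"
          using d1[OF mY] unfolding has_field_derivative_iff .
        thus "((\<lambda>x. (v x - v m) / (x - m)) \<longlongrightarrow> vd m) (at_left m)"
          by (rule tendsto_mono[rotated]) (rule at_le, simp)
        show "at_left m \<noteq> bot" by simp
        have "eventually (\<lambda>x. x \<in> {p0<..<m}) (at_left m)" using mp0 by (rule eventually_at_left_real)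
        thus "eventually (\<lambda>x. s \<le> (v x - v m) / (x - m)) (at_left m)"
        proof eventually_elim
          case (elim x)
          hence x: "p0 < x" "x < m" by auto
          have tx: "t - x > 0" and mx: "m - x > 0" using x t by auto
          define l where "l = (m - x) / (t - x)"
          have l0: "0 \<le> l" using tx mx unfolding l_def by simp
          have lx: "l * (t - x) = m - x" unfolding l_def using tx by simp
          have l1: "l \<le> 1" unfolding l_def using tx mx t by (simp add: divide_le_eq_1)
          have xin: "x \<in> {Y<..}" "t \<in> {Y<..}" using x t mY p0 ZY by auto
          have mid: "(1 - l) *\<^sub>R x + l *\<^sub>R t = m"
          proof -
            have "(1 - l) *\<^sub>R x + l *\<^sub>R t = x + l * (t - x)" by (simp add: algebra_simps)
            also have "\<dots> = m" using lx by simp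
            finally show ?thesis .
          qed
          have c0: "P m \<ge> (1 - l) * P x + l * P t"
            using concave_onD[OF Pconc l0 l1 xin] mid by simp
          have "(P t - P x) * l \<le> P m - P x" using c0 by (simp add: algebra_simps)
          hence "(P t - P x) * l * (t - x) \<le> (P m - P x) * (t - x)"
            using tx by (intro mult_right_mono) auto
          hence c1: "(P t - P x) * (m - x) \<le> (P m - P x) * (t - x)"
            using lx by (simp add: mult.assoc)
          have c2: "(m - x) * (P t - P m) \<le> (t - m) * (P m - P x)"
            using c1 by (simp add: algebra_simps)
          have "v x - P x \<le> v m - P m" using m(2)[of x] x m(1) by auto
          hence "(t - m) * (P m - P x) \<le> (t - m) * (v m - v x)" using tm by (intro mult_left_mono) auto
          with c2 have c3: "(P t - P m) * (m - x) \<le> (v m - v x) * (t - m)"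
            by (simp add: mult.commute)
          have "s = (P t - P m) * (m - x) / ((t - m) * (m - x))"
            unfolding s_def using mx by simp
          also have "\<dots> \<le> (v m - v x) * (t - m) / ((t - m) * (m - x))"
            using c3 tm mx by (intro divide_right_mono) auto
          also have "\<dots> = (v m - v x) / (m - x)" using tm by simp
          also have "\<dots> = (v x - v m) / (x - m)"
            by (metis minus_diff_eq minus_divide_divide)
          finally show ?case .
        qed
      qed
      hence "s * (t - m) \<le> vd m * (t - m)" using tm by (intro mult_right_mono) auto
      moreover have "s * (t - m) = P t - P m" unfolding s_def using tm by simp
      ultimately show ?thesis by simp
    qed
    have v1m: "vd m \<ge> 0"
    proof -
      have "P m \<le> P (m + 1)" using mY by (intro mono_onD[OF Pmono]) auto
      thus ?thesis using slope[of "m+1"] by simp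
    qed
    have wm': "P m < v m" using wm by simp
    have H: "P t < v t" if t: "t > m" and inc: "\<forall>y\<in>{m<..<t}. vd y > vd m" for t
    proof -
      have dd: "(v has_real_derivative vd x) (at x)" if "m \<le> x" "x \<le> t" for x
        using d1[of x] that mY by simp
      obtain z where z: "m < z" "z < t" "v t - v m = (t - m) * vd z"
        using MVT2[OF t dd] by blast
      have "(t - m) * vd m < (t - m) * vd z" using inc z t by (intro mult_strict_left_mono) auto
      hence "v t - v m > vd m * (t - m)" using z(3) by (simp add: mult.commute)
      hence "v t - v m > P t - P m" using slope[OF t] by simp
      thus ?thesis using wm by simp
    qed
    show False
      by (rule core_lemma[where v=v and vd=vd and vdd=vdd and P=P and Y=Y and m=m, OF d1 d2 key vlim mY v1m wm' H])
  qed
qed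


theorem proposition4p14:
  fixes Em :: ereal and R y0 :: real
    and r lam \<sigma> a b \<rho> \<delta> u :: "real \<Rightarrow> real"
  defines "E \<equiv> stateE Em"
    and "\<eta> \<equiv> eta_fun R \<delta> r lam"
    and "atl \<equiv> atilde_fun R a \<rho> lam b"
    and "d \<equiv> d_fun R b \<rho>"
  assumes Em: "Em \<noteq> PInfty"
    and lip: "loc_lipschitz_on E r" "loc_lipschitz_on E lam" "loc_lipschitz_on E \<sigma>"
             "loc_lipschitz_on E a" "loc_lipschitz_on E b" "loc_lipschitz_on E \<rho>"
             "loc_lipschitz_on E \<delta>"
    and sigma_pos: "\<forall>y\<in>E. \<sigma> y > 0"
    and b_nz: "\<forall>y\<in>E. b y \<noteq> 0"
    and rho_bd: "\<forall>y\<in>E. -1 \<le> \<rho> y \<and> \<rho> y \<le> 1"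
    and R: "R > 0" "R \<noteq> 1"
    and y0: "y0 \<in> E"
    \<comment> \<open>u is a positive C^2 solution of the ODE on (y0, infinity)\<close>
    and u_pos: "\<forall>y>y0. u y > 0"
    and u_diff: "\<forall>y>y0. u differentiable (at y) \<and> deriv u differentiable (at y)"
    and u_cont2: "continuous_on {y0<..} (deriv (deriv u))"
    and u_ode: "\<forall>y>y0. 0 = (1/2) * (b y)\<^sup>2 * deriv (deriv u) y + atl y * deriv u y
                         + \<eta> y * u y - (u y)\<^sup>2 - d y * (deriv u y)\<^sup>2 / u y"
    and u_lim: "((\<lambda>y. u y / \<eta> y) \<longlongrightarrow> 1) at_top"
    and u_le: "eventually (\<lambda>y. u y \<le> \<eta> y) at_top"
    \<comment> \<open>eta is C^2 and positive on (y0, infinity)\<close>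
    and eta_diff: "\<forall>y>y0. \<eta> differentiable (at y) \<and> deriv \<eta> differentiable (at y)"
    and eta_cont2: "continuous_on {y0<..} (deriv (deriv \<eta>))"
    and eta_pos: "\<forall>y>y0. \<eta> y > 0"
    and abar: "\<forall>y>y0. atl y / \<eta> y + ((b y)\<^sup>2 - 2 * d y) * deriv \<eta> y / (\<eta> y)\<^sup>2 \<le> 0"
    and Psi_mono: "mono_on {y0<..} (Psi_op b atl d \<eta>)"
    and Psi_concave: "concave_on {y0<..} (Psi_op b atl d \<eta>)"
  shows "eventually (\<lambda>y. u y \<le> \<eta> y * Psi_op b atl d \<eta> y) at_top"
proof -
  have Ein: "y \<in> E" if "y > y0" for y
  proof -
    have "Em < ereal y0" using y0 unfolding E_def stateE_def by auto
    also have "ereal y0 < ereal y" using that by simp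
    finally show ?thesis unfolding E_def stateE_def by auto
  qed
  define u1 where "u1 = deriv u"
  define u2 where "u2 = deriv (deriv u)"
  define e1 where "e1 = deriv \<eta>"
  define e2 where "e2 = deriv (deriv \<eta>)"
  define v where "v = (\<lambda>y. u y / \<eta> y)"
  define v1 where "v1 = (\<lambda>y. u1 y / \<eta> y - u y * e1 y / (\<eta> y)\<^sup>2)"
  define v2 where "v2 = (\<lambda>y. u2 y / \<eta> y - u1 y * e1 y / (\<eta> y)\<^sup>2
      - (u1 y * e1 y + u y * e2 y) / (\<eta> y)\<^sup>2 + 2 * u y * (e1 y)\<^sup>2 / (\<eta> y)^3)"
  define P where "P = Psi_op b atl d \<eta>"
  have du: "(u has_real_derivative u1 y) (at y)" if "y > y0" for y
    using u_diff that unfolding u1_def by (simp add: DERIV_deriv_iff_real_differentiable)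
  have du1: "(u1 has_real_derivative u2 y) (at y)" if "y > y0" for y
    using u_diff that unfolding u1_def u2_def by (simp add: DERIV_deriv_iff_real_differentiable)
  have de: "(\<eta> has_real_derivative e1 y) (at y)" if "y > y0" for y
    using eta_diff that unfolding e1_def by (simp add: DERIV_deriv_iff_real_differentiable)
  have de1: "(e1 has_real_derivative e2 y) (at y)" if "y > y0" for y
    using eta_diff that unfolding e1_def e2_def by (simp add: DERIV_deriv_iff_real_differentiable)
  have d1: "(v has_real_derivative v1 y) (at y)" if y: "y > y0" for y
  proof -
    have ne: "\<eta> y \<noteq> 0" using eta_pos y by (metis less_irrefl)
    have "(v has_real_derivative (u1 y * \<eta> y - u y * e1 y) / (\<eta> y * \<eta> y)) (at y)"
      unfolding v_def by (rule DERIV_divide[OF du[OF y] de[OF y] ne])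
    moreover have "(u1 y * \<eta> y - u y * e1 y) / (\<eta> y * \<eta> y) = v1 y"
      unfolding v1_def using ne by (simp add: field_simps power2_eq_square)
    ultimately show ?thesis by simp
  qed
  have d2: "(v1 has_real_derivative v2 y) (at y)" if y: "y > y0" for y
  proof -
    have ne: "\<eta> y \<noteq> 0" using eta_pos y by (metis less_irrefl)
    have ne2: "(\<eta> y)\<^sup>2 \<noteq> 0" using ne by simp
    show ?thesis
      unfolding v1_def
      apply (rule derivative_eq_intros du[OF y] du1[OF y] de[OF y] de1[OF y] ne ne2 refl)+
      using ne apply (simp add: v2_def field_simps power2_eq_square power3_eq_cube)
      done
  qed
  have key: "v2 y > 0" if y: "y > y0" and vP: "v y > P y" and v1p: "v1 y \<ge> 0" for y
  proof -
    have ep: "\<eta> y > 0" using eta_pos y by auto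
    have up: "u y > 0" using u_pos y by auto
    have yE: "y \<in> E" using Ein y .
    have Bp: "(b y)\<^sup>2 > 0" using b_nz yE by auto
    have rho2: "(\<rho> y)\<^sup>2 \<le> 1"
    proof -
      have "0 \<le> (1 - \<rho> y) * (1 + \<rho> y)" using rho_bd yE by (intro mult_nonneg_nonneg) auto
      thus ?thesis by (simp add: algebra_simps power2_eq_square)
    qed
    have dnn: "d y \<ge> 0" unfolding d_def d_fun_def
      using rho2 R by (intro mult_nonneg_nonneg) (auto intro!: add_nonneg_nonneg)
    have ode: "0 = (1/2)*(b y)\<^sup>2*u2 y + atl y*u1 y + \<eta> y*u y - (u y)^2 - d y*(u1 y)^2/u y"
      using u_ode y unfolding u1_def u2_def by auto
    note id = key_alg[OF ep up ode, of "e1 y" "e2 y"]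
    define A where "A = atl y / \<eta> y + ((b y)\<^sup>2 - 2 * d y) * e1 y / (\<eta> y)\<^sup>2"
    have A: "A \<le> 0" using abar y unfolding A_def e1_def by auto
    have vy: "v y = u y / \<eta> y" unfolding v_def by simp
    have Py: "P y = 1 + ((1/2)*(b y)\<^sup>2*e2 y + atl y*e1 y)/(\<eta> y)^2 - d y*(e1 y)^2/(\<eta> y)^3"
      unfolding P_def Psi_op_def e1_def e2_def by simp
    have vpos: "v y > 0" using up ep unfolding v_def by simp
    have t1: "v y * (v y - P y) > 0" using vpos vP by simp
    have t2: "- A * v1 y \<ge> 0" using A v1p by (simp add: mult_nonpos_nonneg)
    have t3: "(d y / \<eta> y) * (v1 y)\<^sup>2 / v y \<ge> 0" using dnn ep vpos by simp
    have "(b y)\<^sup>2 * v2 y = 2 * \<eta> y * (v y * (v y - P y) - A * v1 y + (d y / \<eta> y) * (v1 y)\<^sup>2 / v y)"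
      using id unfolding v2_def v1_def A_def Py vy by simp
    moreover have "2 * \<eta> y * (v y * (v y - P y) - A * v1 y + (d y / \<eta> y) * (v1 y)\<^sup>2 / v y) > 0"
      using t1 t2 t3 ep by (intro mult_pos_pos) auto
    ultimately have "(b y)\<^sup>2 * v2 y > 0" by simp
    thus ?thesis using Bp by (simp add: zero_less_mult_iff)
  qed
  have vle: "eventually (\<lambda>y. v y \<le> 1) at_top"
    using u_le eventually_gt_at_top[of y0]
  proof eventually_elim
    case (elim y) thus ?case using eta_pos unfolding v_def by (simp add: divide_le_eq_1)
  qed
  have "eventually (\<lambda>y. v y \<le> P y) at_top"
    by (rule abstract_main[where v=v and vd=v1 and vdd=v2 and P=P and Y=y0, OF d1 d2 key])
       (use u_lim vle Psi_mono Psi_concave in \<open>auto simp: v_def P_def\<close>)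
  thus ?thesis using eventually_gt_at_top[of y0]
  proof eventually_elim
    case (elim y)
    hence "u y / \<eta> y \<le> P y" "\<eta> y > 0" using eta_pos unfolding v_def by auto
    thus ?case unfolding P_def by (simp add: divide_le_eq mult.commute)
  qed
qed

end
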